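(* Let $G$ be a connected graph on $X$, let $k\ge1$, and let $A,B\in\mathcal C_k$ be such that $A\cap B$ and $A^c\cap B^c$ also belong to $\mathcal C_k$. Then $$\mathrm{nd}_k(A\cap B)+\mathrm{nd}_k(A^c\cap B^c)\le\mathrm{nd}_k(A)+\mathrm{nd}_k(B),$$ and if $A$ and $B$ are not nested, then $$\mathrm{nd}_k(A\cap B)+\mathrm{nd}_k(A^c\cap B^c)\le\mathrm{nd}_k(A)+\mathrm{nd}_k(B)-2.$$
   Context: A graph on $X$ is an irreflexive symmetric relation $G\subseteq X^2$. For $A\subseteq X$, $A^c:=X\setminus A$ and $\delta A$ is the set of edges with one endpoint in $A$ and the other in $A^c$. A cut is a set $A$ with $A$, $A^c$ infinite and $\delta A$ finite; it is neat if the induced subgraphs on $A$ and $A^c$ are connected; $\mathcal C_k$ is the set of neat cuts $A$ with $|\delta A|=k$. Sets $A,B$ are nested if one of $A\cap B$, $A\cap B^c$, $A^c\cap B$, $A^c\cap B^c$ is empty. $N_k(A)$ is the set of cuts in $\mathcal C_k$ not nested with $A$ (finite when $\delta A$ is finite), and $\mathrm{nd}_k(A):=|N_k(A)|$. *)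

theory Defs
  imports Main
begin

text \<open>A graph on X: an irreflexive symmetric relation G \<subseteq> X \<times> X.
  Complements are taken relative to X.\<close>

definition is_graph :: "'a set \<Rightarrow> ('a \<times> 'a) set \<Rightarrow> bool" where
  "is_graph X G \<longleftrightarrow> G \<subseteq> X \<times> X \<and> irrefl G \<and> sym G"

definition induced_connected :: "('a \<times> 'a) set \<Rightarrow> 'a set \<Rightarrow> bool" where
  "induced_connected G S \<longleftrightarrow> (\<forall>x\<in>S. \<forall>y\<in>S. (x, y) \<in> (G \<inter> (S \<times> S))\<^sup>*)"

definition graph_connected :: "'a set \<Rightarrow> ('a \<times> 'a) set \<Rightarrow> bool" where
  "graph_connected X G \<longleftrightarrow> induced_connected G X"

text \<open>Edge boundary: each undirected edge {x,y} with x \<in> A, y \<in> X - A is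
  represented once, as the ordered pair (x,y).\<close>
definition boundary :: "'a set \<Rightarrow> ('a \<times> 'a) set \<Rightarrow> 'a set \<Rightarrow> ('a \<times> 'a) set" where
  "boundary X G A = {(x, y) \<in> G. x \<in> A \<and> y \<in> X - A}"

definition is_cut :: "'a set \<Rightarrow> ('a \<times> 'a) set \<Rightarrow> 'a set \<Rightarrow> bool" where
  "is_cut X G A \<longleftrightarrow> A \<subseteq> X \<and> infinite A \<and> infinite (X - A) \<and> finite (boundary X G A)"

definition neat_cut :: "'a set \<Rightarrow> ('a \<times> 'a) set \<Rightarrow> 'a set \<Rightarrow> bool" where
  "neat_cut X G A \<longleftrightarrow> is_cut X G A \<and> induced_connected G A \<and> induced_connected G (X - A)"

definition neat_cuts :: "'a set \<Rightarrow> ('a \<times> 'a) set \<Rightarrow> nat \<Rightarrow> 'a set set" where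
  "neat_cuts X G k = {A. neat_cut X G A \<and> card (boundary X G A) = k}"

definition nested :: "'a set \<Rightarrow> 'a set \<Rightarrow> 'a set \<Rightarrow> bool" where
  "nested X A B \<longleftrightarrow> A \<inter> B = {} \<or> A \<inter> (X - B) = {} \<or> (X - A) \<inter> B = {} \<or> (X - A) \<inter> (X - B) = {}"

definition not_nested_set :: "'a set \<Rightarrow> ('a \<times> 'a) set \<Rightarrow> nat \<Rightarrow> 'a set \<Rightarrow> 'a set set" where
  "not_nested_set X G k A = {C \<in> neat_cuts X G k. \<not> nested X C A}"

definition nd :: "'a set \<Rightarrow> ('a \<times> 'a) set \<Rightarrow> nat \<Rightarrow> 'a set \<Rightarrow> nat" where
  "nd X G k A = card (not_nested_set X G k A)"

end

theory Submission
  imports Defs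
begin

lemma rtrancl_finite_sub:
  assumes "(a,b) \<in> R\<^sup>*" shows "\<exists>F. finite F \<and> F \<subseteq> R \<and> (a,b) \<in> F\<^sup>*"
  using assms
proof (induction rule: rtrancl_induct)
  case base
  then show ?case by (intro exI[of _ "{}"]) auto
next
  case (step y z)
  then obtain F where F: "finite F" "F \<subseteq> R" "(a,y) \<in> F\<^sup>*" by blast
  have "(a,y) \<in> (insert (y,z) F)\<^sup>*" using F(3) rtrancl_mono[of F "insert (y,z) F"] by blast
  then have "(a,z) \<in> (insert (y,z) F)\<^sup>*" by (meson insertI1 rtrancl.rtrancl_into_rtrancl)
  then show ?case using F step by (intro exI[of _ "insert (y,z) F"]) auto
qed

lemma cross_edge:
  assumes "(a,b) \<in> R\<^sup>*" "a \<in> D" "b \<notin> D" shows "\<exists>x y. (x,y) \<in> R \<and> x \<in> D \<and> y \<notin> D"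
  using assms
proof (induction rule: rtrancl_induct)
  case base then show ?case by simp
next
  case (step y z)
  then show ?case by (cases "y \<in> D") auto
qed

definition T :: "'a set \<Rightarrow> ('a \<times> 'a) set \<Rightarrow> nat \<Rightarrow> 'a \<Rightarrow> 'a \<Rightarrow> 'a set set" where
  "T X G k u v = {D. D \<subseteq> X \<and> induced_connected G D \<and> induced_connected G (X - D)
     \<and> finite (boundary X G D) \<and> card (boundary X G D) = k \<and> u \<in> D \<and> v \<notin> D}"

lemma finite_T:
  "(u,v) \<in> G \<Longrightarrow> v \<in> X \<Longrightarrow> finite (T X G k u v)"
proof (induction k arbitrary: G u v)
  case 0
  have "T X G 0 u v = {}"
  proof (rule ccontr)
    assume "T X G 0 u v \<noteq> {}"
    then obtain D where D: "D \<in> T X G 0 u v" by blast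
    then have "(u,v) \<in> boundary X G D" using 0 unfolding T_def boundary_def by auto
    with D show False unfolding T_def by auto
  qed
  then show ?case by simp
next
  case (Suc m)
  define G' where "G' = G - {(u,v)}"
  have bd: "boundary X G' D = boundary X G D - {(u,v)}" for D
    unfolding boundary_def G'_def by auto
  have sub1: "G \<inter> D \<times> D = G' \<inter> D \<times> D" if "v \<notin> D" for D
    using that unfolding G'_def by auto
  have sub2: "G \<inter> (X - D) \<times> (X - D) = G' \<inter> (X - D) \<times> (X - D)" if "u \<in> D" for D
    using that unfolding G'_def by auto
  show ?case
  proof (cases "(u,v) \<in> (G' \<inter> X \<times> X)\<^sup>*")
    case True
    then obtain F where F: "finite F" "F \<subseteq> G' \<inter> X \<times> X" "(u,v) \<in> F\<^sup>*"
      using rtrancl_finite_sub[OF True] by blast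
    have "T X G (Suc m) u v \<subseteq> (\<Union>(x,y)\<in>F. T X G' m x y)"
    proof
      fix D assume D: "D \<in> T X G (Suc m) u v"
      then have Dp: "D \<subseteq> X" "induced_connected G D" "induced_connected G (X - D)"
        "finite (boundary X G D)" "card (boundary X G D) = Suc m" "u \<in> D" "v \<notin> D"
        unfolding T_def by auto
      obtain x y where xy: "(x,y) \<in> F" "x \<in> D" "y \<notin> D" using cross_edge[OF F(3) Dp(6,7)] by blast
      have uvb: "(u,v) \<in> boundary X G D" using Suc.prems Dp unfolding boundary_def by auto
      have c1: "induced_connected G' D" using Dp(2)
        unfolding induced_connected_def sub1[OF Dp(7)] by assumption
      have c2: "induced_connected G' (X - D)" using Dp(3)
        unfolding induced_connected_def sub2[OF Dp(6)] by assumption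
      have f: "finite (boundary X G' D)" using Dp(4) unfolding bd by simp
      have cd: "card (boundary X G' D) = m" using Dp(4,5) uvb unfolding bd by simp
      have "D \<in> T X G' m x y"
        unfolding T_def using Dp(1) xy c1 c2 f cd by simp
      then show "D \<in> (\<Union>(x,y)\<in>F. T X G' m x y)" by - (rule UN_I[OF xy(1)], simp)
    qed
    moreover have "finite (\<Union>(x,y)\<in>F. T X G' m x y)"
    proof (rule finite_UN_I[OF F(1)])
      fix e assume e: "e \<in> F"
      obtain x y where xy: "e = (x,y)" by fastforce
      have "(x,y) \<in> G'" "y \<in> X" using e F(2) xy by auto
      then show "finite (case e of (x,y) \<Rightarrow> T X G' m x y)" using Suc.IH xy by simp
    qed
    ultimately show ?thesis by (rule finite_subset)
  next
    case False
    define C where "C = {x \<in> X. (u,x) \<in> (G' \<inter> X \<times> X)\<^sup>*}"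
    have "T X G (Suc m) u v \<subseteq> {C}"
    proof
      fix D assume D: "D \<in> T X G (Suc m) u v"
      then have Dp: "D \<subseteq> X" "induced_connected G D" "induced_connected G (X - D)"
        "u \<in> D" "v \<notin> D"
        unfolding T_def by auto
      have m1: "(G \<inter> D \<times> D)\<^sup>* \<subseteq> (G' \<inter> X \<times> X)\<^sup>*"
        using Dp(1) sub1[OF Dp(5)] by (intro rtrancl_mono) auto
      have m2: "(G \<inter> (X - D) \<times> (X - D))\<^sup>* \<subseteq> (G' \<inter> X \<times> X)\<^sup>*"
        using sub2[OF Dp(4)] by (intro rtrancl_mono) auto
      have "D \<subseteq> C"
        using Dp m1 unfolding C_def induced_connected_def by blast
      moreover have "C \<subseteq> D"
      proof
        fix x assume x: "x \<in> C"
        show "x \<in> D"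
        proof (rule ccontr)
          assume "x \<notin> D"
          then obtain a b where ab: "(a,b) \<in> G' \<inter> X \<times> X" "a \<in> D" "b \<notin> D"
            using cross_edge[of u x "G' \<inter> X \<times> X" D] x Dp(4) unfolding C_def by blast
          have "(u,a) \<in> (G' \<inter> X \<times> X)\<^sup>*" using Dp(2) Dp(4) ab(2) m1
            unfolding induced_connected_def by blast
          moreover have "(b,v) \<in> (G' \<inter> X \<times> X)\<^sup>*" using Dp(3) Dp(5) ab Suc.prems(2) m2
            unfolding induced_connected_def by blast
          ultimately have "(u,v) \<in> (G' \<inter> X \<times> X)\<^sup>*" using ab(1)
            by (meson rtrancl_into_rtrancl rtrancl_trans)
          with False show False by simp
        qed
      qed
      ultimately show "D \<in> {C}" by auto
    qed
    then show ?thesis using finite_subset by blast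
  qed
qed


lemma finite_N:
  assumes GX: "G \<subseteq> X \<times> X" and conn: "graph_connected X G" and AX: "A \<subseteq> X"
    and Ac: "induced_connected G A" and fb: "finite (boundary X G A)"
  shows "finite (not_nested_set X G k A)"
proof -
  define V where "V = fst ` boundary X G A"
  have fV: "finite V" unfolding V_def using fb by simp
  have VX: "V \<subseteq> A" unfolding V_def boundary_def by auto
  define P where "P = (\<lambda>p q. SOME F. finite F \<and> F \<subseteq> G \<inter> X \<times> X \<and> (p,q) \<in> F\<^sup>*)"
  have P: "finite (P p q) \<and> P p q \<subseteq> G \<inter> X \<times> X \<and> (p,q) \<in> (P p q)\<^sup>*" if "p \<in> V" "q \<in> V" for p q
  proof -
    have "(p,q) \<in> (G \<inter> X \<times> X)\<^sup>*" using conn that VX AX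
      unfolding graph_connected_def induced_connected_def by blast
    then have "\<exists>F. finite F \<and> F \<subseteq> G \<inter> X \<times> X \<and> (p,q) \<in> F\<^sup>*" by (rule rtrancl_finite_sub)
    then show ?thesis unfolding P_def by (rule someI_ex)
  qed
  define E where "E = (\<Union>p\<in>V. \<Union>q\<in>V. P p q)"
  have fE: "finite E" unfolding E_def using fV P by auto
  have EG: "E \<subseteq> G \<inter> X \<times> X" unfolding E_def using P by blast
  have "not_nested_set X G k A \<subseteq> (\<Union>e\<in>E. T X G k (fst e) (snd e))"
  proof
    fix D assume "D \<in> not_nested_set X G k A"
    then have D: "D \<subseteq> X" "induced_connected G D" "induced_connected G (X - D)"
      "finite (boundary X G D)" "card (boundary X G D) = k" "\<not> nested X D A"
      unfolding not_nested_set_def neat_cuts_def neat_cut_def is_cut_def by auto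
    obtain p0 where p0: "p0 \<in> D" "p0 \<in> A" using D(6) unfolding nested_def by blast
    obtain q0 where q0: "q0 \<in> D" "q0 \<notin> A" using D(6) unfolding nested_def by blast
    obtain p1 where p1: "p1 \<in> X - D" "p1 \<in> A" using D(6) unfolding nested_def by blast
    obtain q1 where q1: "q1 \<in> X - D" "q1 \<notin> A" using D(6) unfolding nested_def by blast
    have "(p0,q0) \<in> (G \<inter> D \<times> D)\<^sup>*" using D(2) p0 q0 unfolding induced_connected_def by blast
    from cross_edge[OF this p0(2) q0(2)] obtain a1 b1 where
      ab1: "(a1,b1) \<in> G \<inter> D \<times> D" "a1 \<in> A" "b1 \<notin> A" by blast
    have "(p1,q1) \<in> (G \<inter> (X - D) \<times> (X - D))\<^sup>*" using D(3) p1 q1 unfolding induced_connected_def by blast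
    from cross_edge[OF this p1(2) q1(2)] obtain a2 b2 where
      ab2: "(a2,b2) \<in> G \<inter> (X - D) \<times> (X - D)" "a2 \<in> A" "b2 \<notin> A" by blast
    have a1V: "a1 \<in> V" unfolding V_def boundary_def using ab1 D(1)
      by (intro image_eqI[of _ _ "(a1,b1)"]) auto
    have a2V: "a2 \<in> V" unfolding V_def boundary_def using ab2
      by (intro image_eqI[of _ _ "(a2,b2)"]) auto
    have Pa: "(a1,a2) \<in> (P a1 a2)\<^sup>*" using P[OF a1V a2V] by simp
    have "a1 \<in> D" "a2 \<notin> D" using ab1 ab2 by auto
    from cross_edge[OF Pa this] obtain x y where xy: "(x,y) \<in> P a1 a2" "x \<in> D" "y \<notin> D" by blast
    have xyE: "(x,y) \<in> E" unfolding E_def using xy(1) a1V a2V by blast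
    have "D \<in> T X G k x y" unfolding T_def using D xy by simp
    then show "D \<in> (\<Union>e\<in>E. T X G k (fst e) (snd e))" by - (rule UN_I[OF xyE], simp)
  qed
  moreover have "finite (\<Union>e\<in>E. T X G k (fst e) (snd e))"
  proof (rule finite_UN_I[OF fE])
    fix e assume "e \<in> E"
    then have "(fst e, snd e) \<in> G" "snd e \<in> X" using EG by auto
    then show "finite (T X G k (fst e) (snd e))" by (rule finite_T)
  qed
  ultimately show ?thesis by (rule finite_subset)
qed

lemma nest_sym: "nested X A B \<longleftrightarrow> nested X B A"
  unfolding nested_def by blast

lemma nest1:
  assumes "D \<subseteq> X" "A \<subseteq> X" "B \<subseteq> X" "(X - A) \<inter> (X - B) \<noteq> {}"
    "nested X D A" "nested X D B"
  shows "nested X D (A \<inter> B)"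
  using assms unfolding nested_def by blast

lemma nest2:
  assumes "D \<subseteq> X" "A \<subseteq> X" "B \<subseteq> X" "A \<inter> B \<noteq> {}"
    "nested X D A" "nested X D B"
  shows "nested X D ((X - A) \<inter> (X - B))"
  using assms unfolding nested_def by blast

lemma nest3:
  assumes "D \<subseteq> X" "A \<subseteq> X" "B \<subseteq> X" "nested X D A"
  shows "nested X D (A \<inter> B) \<or> nested X D ((X - A) \<inter> (X - B))"
  using assms unfolding nested_def by blast


theorem mainTheorem18:
  fixes X :: "'a set" and G :: "('a \<times> 'a) set" and k :: nat and A B :: "'a set"
  assumes "is_graph X G" and "graph_connected X G" and "k \<ge> 1"
    and "A \<in> neat_cuts X G k" and "B \<in> neat_cuts X G k"
    and "A \<inter> B \<in> neat_cuts X G k"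
    and "(X - A) \<inter> (X - B) \<in> neat_cuts X G k"
  shows "nd X G k (A \<inter> B) + nd X G k ((X - A) \<inter> (X - B)) \<le> nd X G k A + nd X G k B
       \<and> (\<not> nested X A B \<longrightarrow>
         nd X G k (A \<inter> B) + nd X G k ((X - A) \<inter> (X - B)) + 2 \<le> nd X G k A + nd X G k B)"
proof -
  have GX: "G \<subseteq> X \<times> X" using assms(1) unfolding is_graph_def by simp
  have Ap: "A \<subseteq> X" "induced_connected G A" "finite (boundary X G A)"
    using assms(4) unfolding neat_cuts_def neat_cut_def is_cut_def by auto
  have Bp: "B \<subseteq> X" "induced_connected G B" "finite (boundary X G B)"
    using assms(5) unfolding neat_cuts_def neat_cut_def is_cut_def by auto
  have ABne: "A \<inter> B \<noteq> {}"
    using assms(6) unfolding neat_cuts_def neat_cut_def is_cut_def by auto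
  have ABcne: "(X - A) \<inter> (X - B) \<noteq> {}"
    using assms(7) unfolding neat_cuts_def neat_cut_def is_cut_def by auto
  define NA where "NA = not_nested_set X G k A"
  define NB where "NB = not_nested_set X G k B"
  define P where "P = not_nested_set X G k (A \<inter> B)"
  define Q where "Q = not_nested_set X G k ((X - A) \<inter> (X - B))"
  have fNA: "finite NA" unfolding NA_def using finite_N[OF GX assms(2) Ap] .
  have fNB: "finite NB" unfolding NB_def using finite_N[OF GX assms(2) Bp] .
  have CX: "C \<subseteq> X" if "C \<in> neat_cuts X G k" for C
    using that unfolding neat_cuts_def neat_cut_def is_cut_def by auto
  have PU: "P \<subseteq> NA \<union> NB"
  proof
    fix C assume C: "C \<in> P"
    then have C1: "C \<in> neat_cuts X G k" "\<not> nested X C (A \<inter> B)"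
      unfolding P_def not_nested_set_def by auto
    show "C \<in> NA \<union> NB"
    proof (rule ccontr)
      assume "C \<notin> NA \<union> NB"
      then have "nested X C A" "nested X C B" using C1 unfolding NA_def NB_def not_nested_set_def by auto
      with nest1[OF CX[OF C1(1)] Ap(1) Bp(1) ABcne] C1(2) show False by blast
    qed
  qed
  have QU: "Q \<subseteq> NA \<union> NB"
  proof
    fix C assume C: "C \<in> Q"
    then have C1: "C \<in> neat_cuts X G k" "\<not> nested X C ((X - A) \<inter> (X - B))"
      unfolding Q_def not_nested_set_def by auto
    show "C \<in> NA \<union> NB"
    proof (rule ccontr)
      assume "C \<notin> NA \<union> NB"
      then have "nested X C A" "nested X C B" using C1 unfolding NA_def NB_def not_nested_set_def by auto
      with nest2[OF CX[OF C1(1)] Ap(1) Bp(1) ABne] C1(2) show False by blast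
    qed
  qed
  have PQ: "P \<inter> Q \<subseteq> NA \<inter> NB"
  proof
    fix C assume C: "C \<in> P \<inter> Q"
    then have C1: "C \<in> neat_cuts X G k" "\<not> nested X C (A \<inter> B)" "\<not> nested X C ((X - A) \<inter> (X - B))"
      unfolding P_def Q_def not_nested_set_def by auto
    have "\<not> nested X C A" using nest3[OF CX[OF C1(1)] Ap(1) Bp(1)] C1 by blast
    moreover have "\<not> nested X C B" using nest3[OF CX[OF C1(1)] Bp(1) Ap(1)] C1
      by (metis Int_commute)
    ultimately show "C \<in> NA \<inter> NB" using C1(1) unfolding NA_def NB_def not_nested_set_def by auto
  qed
  have fP: "finite P" using PU fNA fNB finite_subset by blast
  have fQ: "finite Q" using QU fNA fNB finite_subset by blast
  have e1: "card P + card Q = card (P \<union> Q) + card (P \<inter> Q)"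
    using card_Un_Int[OF fP fQ] .
  have e2: "card NA + card NB = card (NA \<union> NB) + card (NA \<inter> NB)"
    using card_Un_Int[OF fNA fNB] .
  have i2: "card (P \<inter> Q) \<le> card (NA \<inter> NB)"
    using PQ fNA by (intro card_mono) auto
  have i1: "card (P \<union> Q) \<le> card (NA \<union> NB)"
    using PU QU fNA fNB by (intro card_mono) auto
  have part1: "nd X G k (A \<inter> B) + nd X G k ((X - A) \<inter> (X - B)) \<le> nd X G k A + nd X G k B"
    unfolding nd_def using e1 e2 i1 i2 unfolding NA_def NB_def P_def Q_def by linarith
  have part2: "nd X G k (A \<inter> B) + nd X G k ((X - A) \<inter> (X - B)) + 2 \<le> nd X G k A + nd X G k B"
    if nn: "\<not> nested X A B"
  proof -
    have AB: "A \<noteq> B" using nn unfolding nested_def by blast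
    have ANB: "A \<in> NB" using assms(4) nn unfolding NB_def not_nested_set_def by simp
    have BNA: "B \<in> NA" using assms(5) nn nest_sym unfolding NA_def not_nested_set_def by blast
    have nA: "nested X A (A \<inter> B)" "nested X A ((X - A) \<inter> (X - B))"
      "nested X B (A \<inter> B)" "nested X B ((X - A) \<inter> (X - B))"
      unfolding nested_def by blast+
    have "A \<notin> P \<union> Q" "B \<notin> P \<union> Q" using nA unfolding P_def Q_def not_nested_set_def by auto
    then have "P \<union> Q \<subseteq> (NA \<union> NB) - {A, B}" using PU QU by blast
    then have "card (P \<union> Q) \<le> card ((NA \<union> NB) - {A, B})"
      using fNA fNB by (intro card_mono) auto
    also have "\<dots> = card (NA \<union> NB) - 2"
      using ANB BNA AB by (subst card_Diff_subset) auto
    finally have le: "card (P \<union> Q) \<le> card (NA \<union> NB) - 2" .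
    have "card {A, B} \<le> card (NA \<union> NB)"
      using ANB BNA fNA fNB by (intro card_mono) auto
    then have "2 \<le> card (NA \<union> NB)" using AB by simp
    with le have "card (P \<union> Q) + 2 \<le> card (NA \<union> NB)" by linarith
    then show ?thesis
      unfolding nd_def using e1 e2 i2 unfolding NA_def NB_def P_def Q_def by linarith
  qed
  show ?thesis using part1 part2 by blast
qed

end
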